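(* Let $\rho$ be a measure on $(0,\infty)$ such that $\int_{(b,\infty)}s^{-1/2}\rho(\mathrm{d}s)<\infty$ for all $b>0$. Then $\mathfrak{A}(\rho)$ is definable.
   Context: A measure $\sigma$ on $(0,\infty)$ is locally finite on $(0,\infty)$ if $\sigma((b,c))<\infty$ whenever $0<b<c<\infty$. For a measure $\rho$ on $(0,\infty)$, $\mathfrak{A}(\rho)$ is said to be definable if the function $u\mapsto\int_{(u,\infty)}\pi^{-1/2}(s-u)^{-1/2}\rho(\mathrm{d}s)$ is the density (with respect to Lebesgue measure on $(0,\infty)$) of a locally finite measure on $(0,\infty)$; this measure is then denoted $\mathfrak{A}(\rho)(\mathrm{d}u)=\big(\int_{(u,\infty)}\pi^{-1/2}(s-u)^{-1/2}\rho(\mathrm{d}s)\big)\mathrm{d}u$. *)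

theory Defs
  imports "HOL-Analysis.Analysis"
begin

text \<open>Measures on (0,\<infinity>) are modelled as measures on the reals whose sigma-algebra
  is the Borel sigma-algebra restricted to {0<..}.\<close>

definition pos_half_line_measure :: "real measure \<Rightarrow> bool" where
  "pos_half_line_measure \<rho> \<longleftrightarrow> sets \<rho> = sets (restrict_space borel {0<..})"

definition locally_finite_on_pos :: "real measure \<Rightarrow> bool" where
  "locally_finite_on_pos \<sigma> \<longleftrightarrow>
     (\<forall>b c. 0 < b \<longrightarrow> b < c \<longrightarrow> emeasure \<sigma> {b<..<c} < \<infinity>)"

definition frakA_density :: "real measure \<Rightarrow> real \<Rightarrow> ennreal" where
  "frakA_density \<rho> u =
     (\<integral>\<^sup>+ s. indicator {u<..} s * ennreal (1 / sqrt pi * (s - u) powr (-1/2)) \<partial>\<rho>)"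

definition lebesgue_pos :: "real measure" where
  "lebesgue_pos = restrict_space lborel {0<..}"

definition frakA :: "real measure \<Rightarrow> real measure" where
  "frakA \<rho> = density lebesgue_pos (frakA_density \<rho>)"

definition frakA_definable :: "real measure \<Rightarrow> bool" where
  "frakA_definable \<rho> \<longleftrightarrow>
     frakA_density \<rho> \<in> borel_measurable lebesgue_pos \<and> locally_finite_on_pos (frakA \<rho>)"

end

theory Submission
  imports Defs
begin

lemma meas_g:
  assumes "pos_half_line_measure \<rho>"
  shows "(\<lambda>(u,s). indicator {u<..} s * ennreal (1 / sqrt pi * (s - u) powr (-1/2)))
     \<in> borel_measurable (lborel \<Otimes>\<^sub>M \<rho>)"
proof -
  have id: "(\<lambda>x. x) \<in> borel_measurable \<rho>"
    using assms unfolding pos_half_line_measure_def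
    by (subst measurable_cong_sets[OF _ refl], assumption) (rule measurable_restrict_space1, simp)
  have [measurable]: "snd \<in> borel_measurable (lborel \<Otimes>\<^sub>M \<rho>)"
    using measurable_compose[OF measurable_snd id, of lborel] by simp
  have [measurable]: "fst \<in> borel_measurable (lborel \<Otimes>\<^sub>M \<rho>)"
    using measurable_fst by (metis measurable_lborel1)
  have eq: "(\<lambda>(u,s). indicator {u<..} s * ennreal (1 / sqrt pi * (s - u) powr (-1/2))) =
     (\<lambda>x. if fst x < snd x then ennreal (1 / sqrt pi * (snd x - fst x) powr (-1/2)) else 0)"
    by (auto simp: indicator_def fun_eq_iff)
  show ?thesis unfolding eq by measurable
qed


lemma inner_bound:
  fixes b c s :: real
  assumes bc: "0 < b" "b < c"
  shows "(\<integral>\<^sup>+ u. indicator {u<..} s * ennreal (1 / sqrt pi * (s - u) powr (-1/2)) * indicator {b<..<c} u \<partial>lborel)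
     \<le> ennreal (6 * c) * (indicator {b<..} s * ennreal (s powr (-1/2)))"
proof (cases "s \<le> b")
  case True
  have "(\<integral>\<^sup>+ u. indicator {u<..} s * ennreal (1 / sqrt pi * (s - u) powr (-1/2)) * indicator {b<..<c} u \<partial>lborel)
     = (\<integral>\<^sup>+ u. 0 \<partial>(lborel::real measure))"
    by (rule nn_integral_cong) (use True in \<open>auto simp: indicator_def\<close>)
  then show ?thesis by simp
next
  case False
  hence sb: "b < s" by simp
  have sp: "s > 0" using sb bc by simp
  have pi1: "1 / sqrt pi \<le> 1" using pi_gt3 by (simp add: real_sqrt_ge_one)
  show ?thesis
  proof (cases "2 * c \<le> s")
    case True
    have "(\<integral>\<^sup>+ u. indicator {u<..} s * ennreal (1 / sqrt pi * (s - u) powr (-1/2)) * indicator {b<..<c} u \<partial>lborel)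
       \<le> (\<integral>\<^sup>+ u. ennreal (sqrt 2 * s powr (-1/2)) * indicator {b<..<c} u \<partial>lborel)"
    proof (intro nn_integral_mono)
      fix u
      show "indicator {u<..} s * ennreal (1 / sqrt pi * (s - u) powr (-1/2)) * indicator {b<..<c} u
         \<le> ennreal (sqrt 2 * s powr (-1/2)) * indicator {b<..<c} u"
      proof (cases "b < u \<and> u < c")
        case True
        hence h: "s / 2 \<le> s - u" "0 < s - u" using \<open>2 * c \<le> s\<close> bc by auto
        have "(s - u) powr (-1/2) \<le> (s/2) powr (-1/2)"
          using h sp by (intro powr_mono2') auto
        also have "\<dots> = sqrt 2 * s powr (-1/2)"
          using sp by (simp add: powr_divide powr_minus_divide powr_half_sqrt field_simps)
        finally have "1 / sqrt pi * (s - u) powr (-1/2) \<le> sqrt 2 * s powr (-1/2)"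
          using pi1 by (smt (verit) mult_left_le_one_le powr_ge_zero real_sqrt_ge_zero pi_gt_zero divide_nonneg_nonneg)
        then show ?thesis using True h by (auto simp: indicator_def intro: ennreal_leI)
      qed (auto simp: indicator_def)
    qed
    also have "\<dots> = ennreal (sqrt 2 * s powr (-1/2)) * ennreal (c - b)"
      using bc by (simp add: nn_integral_cmult_indicator)
    also have "\<dots> = ennreal (sqrt 2 * (c - b) * s powr (-1/2))"
      using bc by (simp add: ennreal_mult'[symmetric] mult_ac)
    also have "\<dots> \<le> ennreal (6 * c * s powr (-1/2))"
    proof (intro ennreal_leI mult_right_mono)
      have "sqrt 2 \<le> 2" using real_sqrt_le_mono[of 2 4] by simp
      then show "sqrt 2 * (c - b) \<le> 6 * c" using bc
        using mult_right_mono[of "sqrt 2" 2 "c - b"] by auto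
    qed simp
    finally show ?thesis using sb bc by (simp add: ennreal_mult)
  next
    case False
    note s2c = False
    have "(\<integral>\<^sup>+ u. indicator {u<..} s * ennreal (1 / sqrt pi * (s - u) powr (-1/2)) * indicator {b<..<c} u \<partial>lborel)
       \<le> (\<integral>\<^sup>+ u. ennreal ((s - u) powr (-1/2)) * indicator {s - 2*c..s} u \<partial>lborel)"
    proof (intro nn_integral_mono)
      fix u
      show "indicator {u<..} s * ennreal (1 / sqrt pi * (s - u) powr (-1/2)) * indicator {b<..<c} u
         \<le> ennreal ((s - u) powr (-1/2)) * indicator {s - 2*c..s} u"
      proof (cases "b < u \<and> u < c \<and> u < s")
        case True
        have "1 / sqrt pi * (s - u) powr (-1/2) \<le> (s - u) powr (-1/2)"
          by (rule mult_left_le_one_le) (use pi1 in auto)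
        then show ?thesis using True bc s2c by (auto simp: indicator_def intro: ennreal_leI)
      qed (auto simp: indicator_def)
    qed
    also have "\<dots> = (\<integral>\<^sup>+ v. ennreal (v powr (-1/2)) * indicator {0..2*c} v \<partial>lborel)"
    proof -
      have "(\<integral>\<^sup>+ u. ennreal ((s - u) powr (-1/2)) * indicator {s - 2*c..s} u \<partial>lborel)
          = ennreal \<bar>-1\<bar> * (\<integral>\<^sup>+ v. ennreal ((s - (s + (-1) * v)) powr (-1/2)) * indicator {s - 2*c..s} (s + (-1) * v) \<partial>lborel)"
        by (rule nn_integral_real_affine) auto
      also have "\<dots> = (\<integral>\<^sup>+ v. ennreal (v powr (-1/2)) * indicator {0..2*c} v \<partial>lborel)"
        by (auto intro!: nn_integral_cong simp: indicator_def)
      finally show ?thesis .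
    qed
    also have "\<dots> = ennreal ((2*c) powr (-1/2 + 1) / (-1/2 + 1))"
      by (rule nn_integral_has_integral_lebesgue'[OF _ has_integral_powr_from_0]) (use bc in auto)
    also have "\<dots> \<le> ennreal (6 * c * s powr (-1/2))"
    proof (intro ennreal_leI)
      have "(2*c) powr (-1/2) \<le> s powr (-1/2)"
        using False sp by (intro powr_mono2') auto
      hence "6 * c * (2*c) powr (-1/2) \<le> 6 * c * s powr (-1/2)" using bc by simp
      moreover have "6 * c * (2*c) powr (-1/2) = 3 * (2*c) powr (1/2)"
      proof -
        define p where "p = (2*c) powr (1/2)"
        define q where "q = (2*c) powr (-1/2)"
        have pp: "p * p = 2*c" using bc unfolding p_def
          by (simp add: powr_add[symmetric])
        have pq: "p * q = 1" using bc unfolding p_def q_def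
          by (simp add: powr_add[symmetric])
        have "6 * c * q = 3 * (p * p) * q" using pp by simp
        also have "\<dots> = 3 * p * (p * q)" by (simp add: mult_ac)
        also have "\<dots> = 3 * p" using pq by simp
        finally show ?thesis unfolding p_def q_def .
      qed
      moreover have "(2*c) powr (-1/2 + 1) / (-1/2 + 1) = 2 * (2*c) powr (1/2)" by simp
      ultimately show "(2*c) powr (-1/2 + 1) / (-1/2 + 1) \<le> 6 * c * s powr (-1/2)"
        using powr_ge_zero[of "2*c" "1/2"] by linarith
    qed
    finally show ?thesis using sb bc by (simp add: ennreal_mult)
  qed
qed


lemma meas_rho:
  assumes "pos_half_line_measure \<rho>" and "f \<in> borel_measurable borel"
  shows "f \<in> borel_measurable \<rho>"
  using assms(1) unfolding pos_half_line_measure_def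
  by (subst measurable_cong_sets[OF _ refl], assumption) (rule measurable_restrict_space1, rule assms(2))

lemma space_rho:
  assumes "pos_half_line_measure \<rho>"
  shows "space \<rho> = {0<..}"
  using sets_eq_imp_space_eq[of \<rho> "restrict_space borel {0<..}"] assms
  by (simp add: pos_half_line_measure_def space_restrict_space)

lemma sigma_finite_rho:
  assumes pos: "pos_half_line_measure \<rho>"
    and fin: "\<And>b. 0 < b \<Longrightarrow> (\<integral>\<^sup>+ s. indicator {b<..} s * ennreal (s powr (-1/2)) \<partial>\<rho>) < \<infinity>"
  shows "sigma_finite_measure \<rho>"
proof -
  have sets: "sets \<rho> = sets (restrict_space borel {0<..})"
    using pos by (simp add: pos_half_line_measure_def)
  have mem: "{b<..c} \<in> sets \<rho>" if "0 < b" for b c :: real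
    using that unfolding sets by (auto simp: sets_restrict_space_iff)
  have finm: "emeasure \<rho> {b<..c} < \<infinity>" if "0 < b" for b c :: real
  proof -
    have "emeasure \<rho> {b<..c} = (\<integral>\<^sup>+ s. indicator {b<..c} s \<partial>\<rho>)"
      using mem[OF that] by simp
    also have "\<dots> \<le> (\<integral>\<^sup>+ s. ennreal (sqrt \<bar>c\<bar>) * (indicator {b<..} s * ennreal (s powr (-1/2))) \<partial>\<rho>)"
    proof (intro nn_integral_mono)
      fix s
      show "indicator {b<..c} s \<le> ennreal (sqrt \<bar>c\<bar>) * (indicator {b<..} s * ennreal (s powr (-1/2)))"
      proof (cases "b < s \<and> s \<le> c")
        case True
        hence sp: "s > 0" using that by simp
        have "s powr (1/2) \<le> c powr (1/2)" using True sp by (intro powr_mono2) auto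
        hence "1 \<le> c powr (1/2) * s powr (-1/2)"
          using sp by (simp add: powr_minus_divide divide_simps)
        hence "1 \<le> sqrt \<bar>c\<bar> * s powr (-1/2)"
          using True sp by (simp add: powr_half_sqrt)
        then show ?thesis using True
          by (simp add: ennreal_mult[symmetric] ennreal_1[symmetric] del: ennreal_1)
      qed (auto simp: indicator_def)
    qed
    also have "\<dots> = ennreal (sqrt \<bar>c\<bar>) * (\<integral>\<^sup>+ s. indicator {b<..} s * ennreal (s powr (-1/2)) \<partial>\<rho>)"
      by (rule nn_integral_cmult, rule meas_rho[OF pos]) measurable
    also have "\<dots> < \<infinity>" using fin[OF that] by (simp add: ennreal_mult_less_top)
    finally show ?thesis .
  qed
  show ?thesis
  proof (unfold_locales, intro exI[of _ "range (\<lambda>n::nat. {1/Suc n<..real (Suc n)})"] conjI)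
    show "countable (range (\<lambda>n::nat. {1/Suc n<..real (Suc n)}))"
      by (intro countable_image) simp
    show "range (\<lambda>n::nat. {1/Suc n<..real (Suc n)}) \<subseteq> sets \<rho>"
      by (intro image_subsetI mem) simp
    show "\<Union> (range (\<lambda>n::nat. {1/Suc n<..real (Suc n)})) = space \<rho>"
    proof
      show "\<Union> (range (\<lambda>n::nat. {1/Suc n<..real (Suc n)})) \<subseteq> space \<rho>"
      proof (intro UN_least subsetI)
        fix x n assume "x \<in> {1/Suc n<..real (Suc n)}"
        hence "1 / Suc n < x" by simp
        moreover have "0 < 1 / real (Suc n)" by simp
        ultimately have "0 < x" by linarith
        then show "x \<in> space \<rho>" using space_rho[OF pos] by simp
      qed
      show "space \<rho> \<subseteq> \<Union> (range (\<lambda>n::nat. {1/Suc n<..real (Suc n)}))"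
      proof
        fix x assume "x \<in> space \<rho>"
        hence x: "x > 0" using space_rho[OF pos] by auto
        obtain n1 :: nat where n1: "1 / x < n1" using reals_Archimedean2 by blast
        obtain n2 :: nat where n2: "x < n2" using reals_Archimedean2 by blast
        define n where "n = max n1 n2"
        have "real n1 \<le> real n" "real n2 \<le> real n" unfolding n_def by simp_all
        hence "1 / x < Suc n" using n1 by simp
        hence "1 / Suc n < x" using x by (simp add: field_simps)
        moreover have "x \<le> Suc n" using n2 \<open>real n2 \<le> real n\<close> by simp
        ultimately show "x \<in> \<Union> (range (\<lambda>n::nat. {1/Suc n<..real (Suc n)}))"
          by (intro UN_I[of n]) simp_all
      qed
    qed
    show "\<forall>a\<in>range (\<lambda>n::nat. {1/Suc n<..real (Suc n)}). emeasure \<rho> a \<noteq> \<infinity>"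
    proof
      fix a assume "a \<in> range (\<lambda>n::nat. {1/Suc n<..real (Suc n)})"
      then obtain n :: nat where "a = {1/Suc n<..real (Suc n)}" by blast
      then show "emeasure \<rho> a \<noteq> \<infinity>" using finm[of "1/Suc n" "Suc n"] by simp
    qed
  qed
qed


theorem lemma2p6:
  fixes \<rho> :: "real measure"
  assumes "pos_half_line_measure \<rho>"
    and "\<And>b. 0 < b \<Longrightarrow> (\<integral>\<^sup>+ s. indicator {b<..} s * ennreal (s powr (-1/2)) \<partial>\<rho>) < \<infinity>"
  shows "frakA_definable \<rho>"
proof -
  interpret rho: sigma_finite_measure \<rho> by (rule sigma_finite_rho[OF assms])
  interpret pair_sigma_finite lborel \<rho>
    by (simp add: pair_sigma_finite_def lborel.sigma_finite_measure_axioms rho.sigma_finite_measure_axioms)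
  define g where "g = (\<lambda>u s::real. indicator {u<..} s * ennreal (1 / sqrt pi * (s - u) powr (-1/2)))"
  have G: "case_prod g \<in> borel_measurable (lborel \<Otimes>\<^sub>M \<rho>)"
    using meas_g[OF assms(1)] unfolding g_def .
  have D: "frakA_density \<rho> = (\<lambda>u. \<integral>\<^sup>+ s. g u s \<partial>\<rho>)"
    unfolding frakA_density_def g_def ..
  have Dm: "frakA_density \<rho> \<in> borel_measurable lborel"
    unfolding D by (rule rho.borel_measurable_nn_integral[OF G])
  have Dm': "frakA_density \<rho> \<in> borel_measurable lebesgue_pos"
    unfolding lebesgue_pos_def by (rule measurable_restrict_space1[OF Dm])
  have "locally_finite_on_pos (frakA \<rho>)"
    unfolding locally_finite_on_pos_def
  proof (intro allI impI)
    fix b c :: real assume b: "0 < b" and bc: "b < c"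
    have set: "{b<..<c} \<in> sets lebesgue_pos"
      unfolding lebesgue_pos_def using b by (auto simp: sets_restrict_space_iff)
    have Gi: "(\<lambda>(u, s). g u s * indicator {b<..<c} u) \<in> borel_measurable (lborel \<Otimes>\<^sub>M \<rho>)"
    proof -
      have "(\<lambda>(u, s). g u s * indicator {b<..<c} u) = (\<lambda>x. case_prod g x * indicator {b<..<c} (fst x))"
        by auto
      also have "\<dots> \<in> borel_measurable (lborel \<Otimes>\<^sub>M \<rho>)"
        using G by measurable
      finally show ?thesis .
    qed
    have gs: "(\<lambda>s. g u s) \<in> borel_measurable \<rho>" for u
      unfolding g_def by (rule meas_rho[OF assms(1)]) measurable
    have "emeasure (frakA \<rho>) {b<..<c} = (\<integral>\<^sup>+ u. frakA_density \<rho> u * indicator {b<..<c} u \<partial>lebesgue_pos)"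
      unfolding frakA_def by (rule emeasure_density[OF Dm' set])
    also have "\<dots> = (\<integral>\<^sup>+ u. frakA_density \<rho> u * indicator {b<..<c} u * indicator {0<..} u \<partial>lborel)"
      unfolding lebesgue_pos_def by (rule nn_integral_restrict_space) simp
    also have "\<dots> = (\<integral>\<^sup>+ u. (\<integral>\<^sup>+ s. g u s * indicator {b<..<c} u \<partial>\<rho>) \<partial>lborel)"
    proof (rule nn_integral_cong)
      fix u :: real
      have "frakA_density \<rho> u * indicator {b<..<c} u * indicator {0<..} u
          = (\<integral>\<^sup>+ s. g u s \<partial>\<rho>) * indicator {b<..<c} u"
        using b unfolding D by (auto simp: indicator_def)
      also have "\<dots> = (\<integral>\<^sup>+ s. g u s * indicator {b<..<c} u \<partial>\<rho>)"
        by (rule nn_integral_multc[symmetric, OF gs])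
      finally show "frakA_density \<rho> u * indicator {b<..<c} u * indicator {0<..} u
          = (\<integral>\<^sup>+ s. g u s * indicator {b<..<c} u \<partial>\<rho>)" .
    qed
    also have "\<dots> = (\<integral>\<^sup>+ s. (\<integral>\<^sup>+ u. g u s * indicator {b<..<c} u \<partial>lborel) \<partial>\<rho>)"
      by (rule Fubini'[symmetric]) (use Gi in simp)
    also have "\<dots> \<le> (\<integral>\<^sup>+ s. ennreal (6 * c) * (indicator {b<..} s * ennreal (s powr (-1/2))) \<partial>\<rho>)"
      by (intro nn_integral_mono) (unfold g_def, rule inner_bound[OF b bc])
    also have "\<dots> = ennreal (6 * c) * (\<integral>\<^sup>+ s. indicator {b<..} s * ennreal (s powr (-1/2)) \<partial>\<rho>)"
      by (rule nn_integral_cmult, rule meas_rho[OF assms(1)]) measurable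
    also have "\<dots> < \<infinity>" using assms(2)[OF b] by (simp add: ennreal_mult_less_top)
    finally show "emeasure (frakA \<rho>) {b<..<c} < \<infinity>" .
  qed
  then show ?thesis unfolding frakA_definable_def using Dm' by simp
qed

end
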